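(* For $n\in\mathbb{N}$, a triangular automorphism of index $n$ is the automorphism $T_n$ of $E$ with $T_n(e_j)=e_j$ for $j\ne n$ and $T_n(e_n)=-e_n+2P_n$, where $P_n\in E(e_1,\ldots,e_n)\cap E_{(1)}$. Fix $N\in\mathbb{N}$ and triangular automorphisms $T_1,\ldots,T_N$ (of indices $1,\ldots,N$) such that $P_j\in E(e_1,\ldots,e_N)\cap E_{(1)}$ for $j=1,\ldots,N$, and let $\tau_N=\langle T_1,\ldots,T_N\rangle\le\mathrm{Aut}(E)$. Then: (1) $\tau_N$ is abelian; (2) $\tau_N$ has order $2^N$; (3) every $\varphi\in\tau_N$ satisfies $\varphi^2=\mathrm{id}$, hence induces a $\mathbb{Z}_2$-grading $E_\varphi$ on $E$; (4) if $\varphi=T_{j_1}\circ\cdots\circ T_{j_s}$ with $j_1,\ldots,j_s$ pairwise distinct, then $E_\varphi$ is $\mathbb{Z}_2$-isomorphic to $E_{s^\ast}$.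
   Context: $F$ is a field of characteristic zero, $L$ an infinite-dimensional $F$-vector space with basis $e_1,e_2,\ldots$, $E$ its Grassmann algebra. $E_{(1)}$ is the span of the monomials $e_{i_1}\cdots e_{i_m}$ ($i_1<\cdots<i_m$) of odd length $m$. For $k\in\mathbb{N}$, $E(e_1,\ldots,e_k)$ is the span of all monomials having no factor among $e_1,\ldots,e_k$. $E_\varphi$ is the $\mathbb{Z}_2$-grading by the eigenspaces of $\varphi$ for $1$ (degree 0) and $-1$ (degree 1). $E_{s^\ast}$ is the grading in which $e_1,\ldots,e_s$ have degree $1$ and all other $e_i$ degree $0$. $\mathbb{Z}_2$-isomorphic means isomorphic via an algebra isomorphism preserving the degree components. *)

theory Defs
  imports "HOL-Algebra.Bij" "HOL-Algebra.Generated_Groups"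
begin

text \<open>The Grassmann algebra E over a field F of characteristic zero on generators
e_1, e_2, ... (indices are positive naturals).  An element is represented by its
coefficient function on monomials: a monomial e_{i_1}...e_{i_m} (i_1 < ... < i_m)
is represented by the finite set {i_1,...,i_m}.\<close>

type_synonym 'a grass = "nat set \<Rightarrow> 'a"

definition grass_carrier :: "('a::field_char_0) grass set" where
  "grass_carrier = {x. finite {S. x S \<noteq> 0} \<and> (\<forall>S. x S \<noteq> 0 \<longrightarrow> finite S \<and> 0 \<notin> S)}"

text \<open>Sign of the product e_S e_T for disjoint S, T (number of inversions).\<close>
definition gsign :: "nat set \<Rightarrow> nat set \<Rightarrow> 'a::field_char_0" where
  "gsign S T = (-1) ^ card {(i,j). i \<in> S \<and> j \<in> T \<and> j < i}"

definition gmult :: "('a::field_char_0) grass \<Rightarrow> 'a grass \<Rightarrow> 'a grass" where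
  "gmult x y = (\<lambda>U. if finite U then (\<Sum>S\<in>Pow U. gsign S (U - S) * x S * y (U - S)) else 0)"

definition gadd :: "('a::field_char_0) grass \<Rightarrow> 'a grass \<Rightarrow> 'a grass" where
  "gadd x y = (\<lambda>U. x U + y U)"

definition gsmult :: "'a::field_char_0 \<Rightarrow> 'a grass \<Rightarrow> 'a grass" where
  "gsmult c x = (\<lambda>U. c * x U)"

definition gen :: "nat \<Rightarrow> ('a::field_char_0) grass" where
  "gen i = (\<lambda>S. if S = {i} then 1 else 0)"

definition grass_aut :: "(('a::field_char_0) grass \<Rightarrow> 'a grass) \<Rightarrow> bool" where
  "grass_aut f \<longleftrightarrow> bij_betw f grass_carrier grass_carrier
     \<and> (\<forall>x\<in>grass_carrier. \<forall>y\<in>grass_carrier. f (gadd x y) = gadd (f x) (f y))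
     \<and> (\<forall>c. \<forall>x\<in>grass_carrier. f (gsmult c x) = gsmult c (f x))
     \<and> (\<forall>x\<in>grass_carrier. \<forall>y\<in>grass_carrier. f (gmult x y) = gmult (f x) (f y))"

definition grass_odd :: "('a::field_char_0) grass set" where
  "grass_odd = {x\<in>grass_carrier. \<forall>S. x S \<noteq> 0 \<longrightarrow> odd (card S)}"

definition grass_avoid :: "nat \<Rightarrow> ('a::field_char_0) grass set" where
  "grass_avoid k = {x\<in>grass_carrier. \<forall>S. x S \<noteq> 0 \<longrightarrow> S \<inter> {1..k} = {}}"

text \<open>T is the triangular automorphism of index n with respect to P
(as an element of the group of bijections of E, i.e. extensional on E).\<close>
definition triangular_aut :: "nat \<Rightarrow> (('a::field_char_0) grass \<Rightarrow> 'a grass) \<Rightarrow> 'a grass \<Rightarrow> bool" where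
  "triangular_aut n T P \<longleftrightarrow> 1 \<le> n \<and> T \<in> extensional grass_carrier \<and> grass_aut T
     \<and> P \<in> grass_avoid n \<inter> grass_odd
     \<and> (\<forall>j. 1 \<le> j \<and> j \<noteq> n \<longrightarrow> T (gen j) = gen j)
     \<and> T (gen n) = gadd (gsmult (-1) (gen n)) (gsmult 2 P)"

text \<open>tau_N = < T_1, ..., T_N > as a subgroup of the group of bijections of E
(equivalently of Aut(E)).\<close>
definition tau_group :: "(nat \<Rightarrow> ('a::field_char_0) grass \<Rightarrow> 'a grass) \<Rightarrow> nat \<Rightarrow> ('a grass \<Rightarrow> 'a grass) set" where
  "tau_group T N = generate (BijGroup grass_carrier) (T ` {1..N})"

definition comp_list :: "(nat \<Rightarrow> ('a::field_char_0) grass \<Rightarrow> 'a grass) \<Rightarrow> nat list \<Rightarrow> 'a grass \<Rightarrow> 'a grass" where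
  "comp_list T js = foldr (\<lambda>j f. compose grass_carrier (T j) f) js (\<lambda>x\<in>grass_carrier. x)"

definition phi_deg0 :: "(('a::field_char_0) grass \<Rightarrow> 'a grass) \<Rightarrow> 'a grass set" where
  "phi_deg0 \<phi> = {x\<in>grass_carrier. \<phi> x = x}"
definition phi_deg1 :: "(('a::field_char_0) grass \<Rightarrow> 'a grass) \<Rightarrow> 'a grass set" where
  "phi_deg1 \<phi> = {x\<in>grass_carrier. \<phi> x = gsmult (-1) x}"

definition sstar_deg0 :: "nat \<Rightarrow> ('a::field_char_0) grass set" where
  "sstar_deg0 s = {x\<in>grass_carrier. \<forall>S. x S \<noteq> 0 \<longrightarrow> even (card (S \<inter> {1..s}))}"
definition sstar_deg1 :: "nat \<Rightarrow> ('a::field_char_0) grass set" where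
  "sstar_deg1 s = {x\<in>grass_carrier. \<forall>S. x S \<noteq> 0 \<longrightarrow> odd (card (S \<inter> {1..s}))}"

definition z2_iso :: "('a::field_char_0) grass set \<Rightarrow> 'a grass set \<Rightarrow> 'a grass set \<Rightarrow> 'a grass set \<Rightarrow> bool" where
  "z2_iso A0 A1 B0 B1 \<longleftrightarrow> (\<exists>\<psi>. grass_aut \<psi> \<and> \<psi> ` A0 = B0 \<and> \<psi> ` A1 = B1)"

end

theory Submission
  imports Defs
begin

definition gmono :: "nat set \<Rightarrow> ('a::field_char_0) grass" where
  "gmono S = (\<lambda>U. if U = S then 1 else 0)"

lemma gen_mono: "gen i = gmono {i}"
  by (simp add: gen_def gmono_def)

lemma carrier_mono: "finite S \<Longrightarrow> 0 \<notin> S \<Longrightarrow> gmono S \<in> grass_carrier"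
  by (simp add: grass_carrier_def gmono_def)

lemma carrier_gen: "1 \<le> i \<Longrightarrow> gen i \<in> grass_carrier"
  by (simp add: gen_mono carrier_mono)

lemma carrier_gadd: "x \<in> grass_carrier \<Longrightarrow> y \<in> grass_carrier \<Longrightarrow> gadd x y \<in> grass_carrier"
proof -
  assume x: "x \<in> grass_carrier" and y: "y \<in> grass_carrier"
  have "{S. gadd x y S \<noteq> 0} \<subseteq> {S. x S \<noteq> 0} \<union> {S. y S \<noteq> 0}" by (auto simp: gadd_def)
  then show ?thesis using x y unfolding grass_carrier_def
    by (auto simp: gadd_def intro: finite_subset)
qed

lemma carrier_gsmult: "x \<in> grass_carrier \<Longrightarrow> gsmult c x \<in> grass_carrier"
proof -
  assume x: "x \<in> grass_carrier"
  have "{S. gsmult c x S \<noteq> 0} \<subseteq> {S. x S \<noteq> 0}" by (auto simp: gsmult_def)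
  then show ?thesis using x unfolding grass_carrier_def
    by (auto simp: gsmult_def intro: finite_subset)
qed

lemma carrier_gmult: "x \<in> grass_carrier \<Longrightarrow> y \<in> grass_carrier \<Longrightarrow> gmult x y \<in> grass_carrier"
proof -
  assume x: "x \<in> grass_carrier" and y: "y \<in> grass_carrier"
  have sub: "{U. gmult x y U \<noteq> 0} \<subseteq> (\<lambda>(a,b). a \<union> b) ` ({S. x S \<noteq> 0} \<times> {S. y S \<noteq> 0})"
  proof
    fix U assume "U \<in> {U. gmult x y U \<noteq> 0}"
    then have fU: "finite U" and "(\<Sum>S\<in>Pow U. gsign S (U - S) * x S * y (U - S)) \<noteq> 0"
      by (auto simp: gmult_def split: if_splits)
    then obtain S where "S \<in> Pow U" "gsign S (U - S) * x S * y (U - S) \<noteq> 0"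
      using sum.not_neutral_contains_not_neutral by blast
    then have "S \<subseteq> U" "x S \<noteq> 0" "y (U - S) \<noteq> 0" by auto
    then show "U \<in> (\<lambda>(a,b). a \<union> b) ` ({S. x S \<noteq> 0} \<times> {S. y S \<noteq> 0})"
      by (intro image_eqI[of _ _ "(S, U - S)"]) auto
  qed
  have fin: "finite {U. gmult x y U \<noteq> 0}"
    using x y by (intro finite_subset[OF sub]) (auto simp: grass_carrier_def)
  have "\<forall>U. gmult x y U \<noteq> 0 \<longrightarrow> finite U \<and> 0 \<notin> U"
  proof (intro allI impI)
    fix U assume "gmult x y U \<noteq> 0"
    then have "U \<in> (\<lambda>(a,b). a \<union> b) ` ({S. x S \<noteq> 0} \<times> {S. y S \<noteq> 0})" using sub by auto
    then show "finite U \<and> 0 \<notin> U" using x y by (auto simp: grass_carrier_def)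
  qed
  then show ?thesis using fin by (simp add: grass_carrier_def)
qed

lemma carrier_inf: "x \<in> grass_carrier \<Longrightarrow> infinite U \<Longrightarrow> x U = 0"
  by (auto simp: grass_carrier_def)

lemma gsign_empty1[simp]: "gsign {} T = 1" by (simp add: gsign_def)
lemma gsign_empty2[simp]: "gsign S {} = 1" by (simp add: gsign_def)

lemma gmult_one_left: "x \<in> grass_carrier \<Longrightarrow> gmult (gmono {}) x = x"
proof
  fix U assume x: "x \<in> grass_carrier"
  show "gmult (gmono {}) x U = x U"
  proof (cases "finite U")
    case True
    have "(\<Sum>S\<in>Pow U. gsign S (U - S) * gmono {} S * x (U - S)) =
          (\<Sum>S\<in>Pow U. if S = {} then x U else 0)"
      by (rule sum.cong) (auto simp: gmono_def)
    also have "\<dots> = x U" using True by (subst sum.delta) auto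
    finally show ?thesis using True by (simp add: gmult_def)
  qed (simp add: gmult_def carrier_inf x)
qed

lemma gmult_one_right: "x \<in> grass_carrier \<Longrightarrow> gmult x (gmono {}) = x"
proof
  fix U assume x: "x \<in> grass_carrier"
  show "gmult x (gmono {}) U = x U"
  proof (cases "finite U")
    case True
    have "(\<Sum>S\<in>Pow U. gsign S (U - S) * x S * gmono {} (U - S)) =
          (\<Sum>S\<in>Pow U. if S = U then x U else 0)"
      by (rule sum.cong) (auto simp: gmono_def)
    also have "\<dots> = x U" using True by (subst sum.delta) auto
    finally show ?thesis using True by (simp add: gmult_def)
  qed (simp add: gmult_def carrier_inf x)
qed

lemma gsign_single: "\<forall>j\<in>S. i < j \<Longrightarrow> gsign {i} S = 1"
proof -
  assume "\<forall>j\<in>S. i < j"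
  then have "{(a, b). a \<in> {i} \<and> b \<in> S \<and> b < a} = {}" by auto
  then show ?thesis unfolding gsign_def by (metis card.empty power_0)
qed

lemma gmult_gen_mono:
  assumes "finite S" "i \<notin> S" "\<forall>j\<in>S. i < j"
  shows "gmult (gen i) (gmono S) = gmono (insert i S)"
proof
  fix U
  show "gmult (gen i) (gmono S) U = gmono (insert i S) U"
  proof (cases "finite U")
    case True
    have "(\<Sum>S'\<in>Pow U. gsign S' (U - S') * gen i S' * gmono S (U - S')) =
          (\<Sum>S'\<in>Pow U. if S' = {i} then gsign {i} (U - {i}) * gmono S (U - {i}) else 0)"
      by (rule sum.cong) (auto simp: gen_def)
    also have "\<dots> = (if i \<in> U then gsign {i} (U - {i}) * gmono S (U - {i}) else 0)"
      using True by (subst sum.delta) auto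
    also have "\<dots> = gmono (insert i S) U"
    proof (cases "i \<in> U")
      case True
      show ?thesis
      proof (cases "U - {i} = S")
        case True
        then show ?thesis using True \<open>i \<in> U\<close> assms gsign_single[of S i]
          by (auto simp: gmono_def insert_absorb)
      next
        case False
        then show ?thesis using \<open>i \<in> U\<close> assms by (auto simp: gmono_def)
      qed
    qed (auto simp: gmono_def)
    finally show ?thesis using True by (simp add: gmult_def)
  next
    case False
    then show ?thesis using assms by (auto simp: gmult_def gmono_def)
  qed
qed

definition ghom :: "(('a::field_char_0) grass \<Rightarrow> 'a grass) \<Rightarrow> bool" where
  "ghom f \<longleftrightarrow> (\<forall>x\<in>grass_carrier. f x \<in> grass_carrier)
     \<and> (\<forall>x\<in>grass_carrier. \<forall>y\<in>grass_carrier. f (gadd x y) = gadd (f x) (f y))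
     \<and> (\<forall>c. \<forall>x\<in>grass_carrier. f (gsmult c x) = gsmult c (f x))
     \<and> (\<forall>x\<in>grass_carrier. \<forall>y\<in>grass_carrier. f (gmult x y) = gmult (f x) (f y))
     \<and> f (gmono {}) = gmono {}"

lemma ghomD:
  assumes "ghom f"
  shows "\<And>x. x \<in> grass_carrier \<Longrightarrow> f x \<in> grass_carrier"
    and "\<And>x y. x \<in> grass_carrier \<Longrightarrow> y \<in> grass_carrier \<Longrightarrow> f (gadd x y) = gadd (f x) (f y)"
    and "\<And>c x. x \<in> grass_carrier \<Longrightarrow> f (gsmult c x) = gsmult c (f x)"
    and "\<And>x y. x \<in> grass_carrier \<Longrightarrow> y \<in> grass_carrier \<Longrightarrow> f (gmult x y) = gmult (f x) (f y)"
    and "f (gmono {}) = gmono {}"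
  using assms unfolding ghom_def by auto

lemma aut_ghom: assumes "grass_aut f" shows "ghom f"
proof -
  have bij: "bij_betw f grass_carrier grass_carrier" using assms by (simp add: grass_aut_def)
  have mul: "\<And>x y. x \<in> grass_carrier \<Longrightarrow> y \<in> grass_carrier \<Longrightarrow> f (gmult x y) = gmult (f x) (f y)"
    using assms by (simp add: grass_aut_def)
  have one: "gmono {} \<in> grass_carrier" by (rule carrier_mono) auto
  have "gmono {} \<in> f ` grass_carrier" using bij one by (simp add: bij_betw_def)
  then obtain x where x: "x \<in> grass_carrier" "f x = gmono {}" by auto
  have "f x = gmult (f (gmono {})) (f x)"
    using mul[OF one x(1)] gmult_one_left[OF x(1)] by simp
  then have "gmono {} = gmult (f (gmono {})) (gmono {})" using x by simp
  also have "\<dots> = f (gmono {})"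
    by (rule gmult_one_right) (use bij one in \<open>auto simp: bij_betw_def\<close>)
  finally show ?thesis using assms bij unfolding ghom_def grass_aut_def bij_betw_def by auto
qed

lemma ghom_comp: assumes f: "ghom f" and g: "ghom g" shows "ghom (f \<circ> g)"
  unfolding ghom_def comp_def
  by (simp add: ghomD[OF f] ghomD[OF g] carrier_gadd carrier_gsmult carrier_gmult)

lemma ghom_cong: "ghom f \<Longrightarrow> (\<And>x. x \<in> grass_carrier \<Longrightarrow> g x = f x) \<Longrightarrow> ghom g"
proof -
  assume f: "ghom f" and e: "\<And>x. x \<in> grass_carrier \<Longrightarrow> g x = f x"
  have one: "gmono {} \<in> grass_carrier" by (rule carrier_mono) auto
  show ?thesis using one unfolding ghom_def
    by (simp add: e e[OF one] ghomD[OF f] carrier_gadd carrier_gsmult carrier_gmult)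
qed

lemma ghom_id: "ghom (\<lambda>x. x)"
  unfolding ghom_def by auto

lemma ghom_zero: "ghom f \<Longrightarrow> f (\<lambda>U. 0) = (\<lambda>U. 0)"
proof -
  assume f: "ghom f"
  have one: "gmono {} \<in> grass_carrier" by (rule carrier_mono) auto
  have z: "(\<lambda>U. 0) = gsmult 0 (gmono {})" by (simp add: gsmult_def)
  show ?thesis unfolding z using ghomD(3)[OF f one, of 0] ghomD(5)[OF f] by simp
qed

definition restr :: "nat set set \<Rightarrow> ('a::field_char_0) grass \<Rightarrow> 'a grass" where
  "restr F x = (\<lambda>U. if U \<in> F then x U else 0)"

lemma ghom_agree:
  assumes f: "ghom f" and g: "ghom g" and fg: "\<And>i. i \<in> B \<Longrightarrow> f (gen i) = g (gen i)"
    and x: "x \<in> grass_carrier" and xB: "\<And>S. x S \<noteq> 0 \<Longrightarrow> S \<subseteq> B"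
  shows "f x = g x"
proof -
  have gmono: "f (gmono S) = g (gmono S)" if "finite S" "0 \<notin> S" "S \<subseteq> B" for S
    using that
  proof (induction S rule: finite_linorder_min_induct)
    case empty then show ?case using ghomD(5)[OF f] ghomD(5)[OF g] by simp
  next
    case (insert b A)
    have e: "gmono (insert b A) = gmult (gen b) (gmono A)"
      using insert by (intro gmult_gen_mono[symmetric]) auto
    have b1: "1 \<le> b" using insert by (cases b) auto
    have cA: "gmono A \<in> grass_carrier" using insert by (intro carrier_mono) auto
    show ?case unfolding e using ghomD(4)[OF f carrier_gen[OF b1] cA] ghomD(4)[OF g carrier_gen[OF b1] cA]
        insert fg by auto
  qed
  have fin: "finite {S. x S \<noteq> 0}" using x by (simp add: grass_carrier_def)
  have rc: "restr F x \<in> grass_carrier" for F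
  proof -
    have "{S. restr F x S \<noteq> 0} \<subseteq> {S. x S \<noteq> 0}" by (auto simp: restr_def)
    then show ?thesis using x fin unfolding grass_carrier_def by (auto simp: restr_def intro: finite_subset)
  qed
  have R: "f (restr F x) = g (restr F x)" if "finite F" "F \<subseteq> {S. x S \<noteq> 0}" for F
    using that
  proof (induction F rule: finite_induct)
    case empty
    have "restr {} x = (\<lambda>U. 0)" by (simp add: restr_def)
    then show ?case using ghom_zero[OF f] ghom_zero[OF g] by simp
  next
    case (insert S F)
    have S: "finite S" "0 \<notin> S" "S \<subseteq> B" "x S \<noteq> 0" using insert x xB by (auto simp: grass_carrier_def)
    have cS: "gmono S \<in> grass_carrier" using S by (simp add: carrier_mono)
    have e: "restr (insert S F) x = gadd (gsmult (x S) (gmono S)) (restr F x)"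
      using insert by (auto simp: restr_def gadd_def gsmult_def gmono_def)
    have IH: "f (restr F x) = g (restr F x)" using insert by simp
    show ?case unfolding e
      by (simp only: ghomD(2)[OF f carrier_gsmult[OF cS] rc] ghomD(2)[OF g carrier_gsmult[OF cS] rc]
        ghomD(3)[OF f cS] ghomD(3)[OF g cS] gmono[OF S(1-3)] IH)
  qed
  have "restr {S. x S \<noteq> 0} x = x" by (auto simp: restr_def)
  then show ?thesis using R[OF fin order.refl] by simp
qed

definition diag :: "(nat \<Rightarrow> 'a) \<Rightarrow> ('a::field_char_0) grass \<Rightarrow> 'a grass" where
  "diag c x = (\<lambda>U. (\<Prod>i\<in>U. c i) * x U)"

lemma diag_prod_nz: "(\<And>i. c i \<noteq> 0) \<Longrightarrow> (\<Prod>i\<in>U. c i) \<noteq> (0::'a::field_char_0)"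
  by (cases "finite U") (auto simp: prod_zero_iff)

lemma diag_carrier: "(\<And>i. c i \<noteq> 0) \<Longrightarrow> x \<in> grass_carrier \<Longrightarrow> diag c x \<in> grass_carrier"
proof -
  assume c: "\<And>i. c i \<noteq> 0" and x: "x \<in> grass_carrier"
  have "{U. diag c x U \<noteq> 0} = {U. x U \<noteq> 0}" by (auto simp: diag_def diag_prod_nz[of c, OF c])
  then show ?thesis using x unfolding grass_carrier_def by (auto simp: diag_def)
qed

lemma diag_aut: assumes c: "\<And>i. c i \<noteq> (0::'a::field_char_0)" shows "grass_aut (diag c)"
proof -
  have inj: "inj_on (diag c) grass_carrier"
  proof (rule inj_onI)
    fix x y assume "diag c x = diag c y"
    then have "\<And>U. (\<Prod>i\<in>U. c i) * x U = (\<Prod>i\<in>U. c i) * y U" unfolding diag_def by metis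
    then show "x = y" using diag_prod_nz[of c, OF c] by (auto intro!: ext)
  qed
  have surj: "diag c ` grass_carrier = grass_carrier"
  proof
    show "diag c ` grass_carrier \<subseteq> grass_carrier" using diag_carrier[OF c] by auto
  next
    show "grass_carrier \<subseteq> diag c ` grass_carrier"
    proof
      fix y :: "'a grass" assume y: "y \<in> grass_carrier"
      define x where "x = (\<lambda>U. y U / (\<Prod>i\<in>U. c i))"
      have "{U. x U \<noteq> 0} = {U. y U \<noteq> 0}" by (auto simp: x_def diag_prod_nz[of c, OF c])
      then have "x \<in> grass_carrier" using y unfolding grass_carrier_def by (auto simp: x_def)
      moreover have "diag c x = y" by (auto simp: diag_def x_def diag_prod_nz[of c, OF c] intro!: ext)
      ultimately show "y \<in> diag c ` grass_carrier" by blast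
    qed
  qed
  have mul: "diag c (gmult x y) = gmult (diag c x) (diag c y)" for x y
  proof
    fix U
    show "diag c (gmult x y) U = gmult (diag c x) (diag c y) U"
    proof (cases "finite U")
      case True
      have "(\<Prod>i\<in>U. c i) * (\<Sum>S\<in>Pow U. gsign S (U - S) * x S * y (U - S))
          = (\<Sum>S\<in>Pow U. gsign S (U - S) * ((\<Prod>i\<in>S. c i) * x S) * ((\<Prod>i\<in>U - S. c i) * y (U - S)))"
        unfolding sum_distrib_left
      proof (rule sum.cong)
        fix S assume "S \<in> Pow U"
        then have "(\<Prod>i\<in>U. c i) = (\<Prod>i\<in>U - S. c i) * (\<Prod>i\<in>S. c i)"
          using True by (simp add: prod.subset_diff)
        then show "(\<Prod>i\<in>U. c i) * (gsign S (U - S) * x S * y (U - S)) =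
            gsign S (U - S) * ((\<Prod>i\<in>S. c i) * x S) * ((\<Prod>i\<in>U - S. c i) * y (U - S))"
          by (simp add: algebra_simps)
      qed simp
      then show ?thesis using True by (simp add: diag_def gmult_def)
    qed (simp add: diag_def gmult_def)
  qed
  show ?thesis unfolding grass_aut_def bij_betw_def
    using inj surj mul by (auto simp: diag_def gadd_def gsmult_def algebra_simps)
qed

lemma diag_gen: "diag c (gen i) = gsmult (c i) (gen i)"
  by (auto simp: diag_def gen_def gsmult_def intro!: ext)

lemma diag_fix: "(\<And>S i. x S \<noteq> 0 \<Longrightarrow> i \<in> S \<Longrightarrow> c i = 1) \<Longrightarrow> diag c x = x"
proof
  fix U assume h: "\<And>S i. x S \<noteq> 0 \<Longrightarrow> i \<in> S \<Longrightarrow> c i = 1"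
  show "diag c x U = x U"
  proof (cases "x U = 0")
    case False
    then have "(\<Prod>i\<in>U. c i) = 1" using h by (intro prod.neutral) auto
    then show ?thesis by (simp add: diag_def)
  qed (simp add: diag_def)
qed

definition invs :: "(nat \<Rightarrow> nat) \<Rightarrow> nat set \<Rightarrow> (nat \<times> nat) set" where
  "invs p S = {(a,b). a \<in> S \<and> b \<in> S \<and> a < b \<and> p b < p a}"

definition psgn :: "(nat \<Rightarrow> nat) \<Rightarrow> nat set \<Rightarrow> 'a::field_char_0" where
  "psgn p S = (-1) ^ card (invs p S)"

lemma sign_mult:
  assumes p: "inj p" and fS: "finite S" and fT: "finite T" and d: "S \<inter> T = {}"
  shows "gsign (p ` S) (p ` T) * psgn p S * psgn p T = (psgn p (S \<union> T) * gsign S T :: 'a::field_char_0)"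
proof -
  define X where "X = {(a,b). a \<in> S \<and> b \<in> T \<and> p b < p a}"
  define Y where "Y = {(a,b). a \<in> S \<and> b \<in> T \<and> b < a}"
  have fST: "finite (S \<times> T)" using fS fT by simp
  have fX: "finite X" by (rule finite_subset[OF _ fST]) (auto simp: X_def)
  have fY: "finite Y" by (rule finite_subset[OF _ fST]) (auto simp: Y_def)
  have finv: "finite (invs p A)" if "finite A" for A
    by (rule finite_subset[of _ "A \<times> A"]) (use that in \<open>auto simp: invs_def\<close>)
  have c1: "{(i,j). i \<in> p ` S \<and> j \<in> p ` T \<and> j < i} = (\<lambda>(a,b). (p a, p b)) ` X"
  proof (rule Set.set_eqI)
    fix z :: "nat \<times> nat"
    obtain i j where z: "z = (i,j)" by (cases z)
    show "z \<in> {(i,j). i \<in> p ` S \<and> j \<in> p ` T \<and> j < i} \<longleftrightarrow> z \<in> (\<lambda>(a,b). (p a, p b)) ` X"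
    proof
      assume "z \<in> {(i,j). i \<in> p ` S \<and> j \<in> p ` T \<and> j < i}"
      then obtain a b where "a \<in> S" "b \<in> T" "i = p a" "j = p b" "j < i" by (auto simp: z)
      then show "z \<in> (\<lambda>(a,b). (p a, p b)) ` X" unfolding z X_def
        by (intro image_eqI[of _ _ "(a,b)"]) auto
    next
      assume "z \<in> (\<lambda>(a,b). (p a, p b)) ` X"
      then obtain a b where "(a,b) \<in> X" "z = (p a, p b)" by auto
      then show "z \<in> {(i,j). i \<in> p ` S \<and> j \<in> p ` T \<and> j < i}" unfolding X_def by auto
    qed
  qed
  have inj2: "inj_on (\<lambda>(a,b). (p a, p b)) X"
    using p by (auto simp: inj_on_def dest: injD)
  have g1: "gsign (p ` S) (p ` T) = ((-1) ^ card X :: 'a)"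
    unfolding gsign_def c1 using card_image[OF inj2] by simp
  have g2: "gsign S T = ((-1) ^ card Y :: 'a)"
    by (simp add: gsign_def Y_def)
  have e: "invs p (S \<union> T) = ((invs p S \<union> invs p T) \<union> (X - Y)) \<union> ((\<lambda>(a,b). (b,a)) ` (Y - X))"
  proof (rule Set.set_eqI)
    fix z :: "nat \<times> nat"
    obtain a b where z: "z = (a,b)" by (cases z)
    show "z \<in> invs p (S \<union> T) \<longleftrightarrow> z \<in> ((invs p S \<union> invs p T) \<union> (X - Y)) \<union> ((\<lambda>(a,b). (b,a)) ` (Y - X))"
    proof
      assume "z \<in> invs p (S \<union> T)"
      then have h: "a \<in> S \<union> T" "b \<in> S \<union> T" "a < b" "p b < p a" by (auto simp: invs_def z)
      show "z \<in> ((invs p S \<union> invs p T) \<union> (X - Y)) \<union> ((\<lambda>(a,b). (b,a)) ` (Y - X))"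
      proof (cases "a \<in> S")
        case aS: True
        show ?thesis
        proof (cases "b \<in> S")
          case True then show ?thesis using h aS by (auto simp: invs_def z)
        next
          case False then show ?thesis using h aS by (auto simp: X_def Y_def z)
        qed
      next
        case aT: False
        show ?thesis
        proof (cases "b \<in> S")
          case True
          then have "(b,a) \<in> Y - X" using h aT by (auto simp: X_def Y_def)
          then show ?thesis unfolding z by (auto intro: image_eqI[of _ _ "(b,a)"])
        next
          case False then show ?thesis using h aT by (auto simp: invs_def z)
        qed
      qed
    next
      assume "z \<in> ((invs p S \<union> invs p T) \<union> (X - Y)) \<union> ((\<lambda>(a,b). (b,a)) ` (Y - X))"
      then consider "z \<in> invs p S" | "z \<in> invs p T" | "z \<in> X - Y" | "(b,a) \<in> Y - X"
        by (auto simp: z)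
      then show "z \<in> invs p (S \<union> T)"
      proof cases
        case 3
        then have "a \<in> S" "b \<in> T" "p b < p a" "\<not> b < a" by (auto simp: X_def Y_def z)
        moreover have "a \<noteq> b" using d \<open>a \<in> S\<close> \<open>b \<in> T\<close> by auto
        ultimately show ?thesis by (auto simp: invs_def z)
      next
        case 4
        then have "b \<in> S" "a \<in> T" "a < b" "\<not> p a < p b" by (auto simp: X_def Y_def)
        moreover have "p a \<noteq> p b" using d \<open>b \<in> S\<close> \<open>a \<in> T\<close> p by (auto dest: injD)
        ultimately show ?thesis by (auto simp: invs_def z)
      qed (auto simp: invs_def)
    qed
  qed
  have d1: "invs p S \<inter> invs p T = {}" using d by (auto simp: invs_def)
  have d2: "(invs p S \<union> invs p T) \<inter> (X - Y) = {}" using d by (auto simp: invs_def X_def)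
  have d3: "((invs p S \<union> invs p T) \<union> (X - Y)) \<inter> ((\<lambda>(a,b). (b,a)) ` (Y - X)) = {}"
  proof (rule ccontr)
    assume "\<not> ?thesis"
    then obtain a b where ab: "(a,b) \<in> Y - X" "(b,a) \<in> (invs p S \<union> invs p T) \<union> (X - Y)" by auto
    then have "a \<in> S" "b \<in> T" "b < a" unfolding Y_def by auto
    then show False using ab(2) d unfolding invs_def X_def by auto
  qed
  have injsw: "inj_on (\<lambda>(a::nat,b::nat). (b,a)) (Y - X)" by (auto simp: inj_on_def)
  have cST: "card (invs p (S \<union> T)) = card (invs p S) + card (invs p T) + card (X - Y) + card (Y - X)"
    unfolding e
    using fX fY finv[OF fS] finv[OF fT] d1 d2 d3
    by (simp add: card_Un_disjoint card_image[OF injsw])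
  have cX: "card X = card (X \<inter> Y) + card (X - Y)"
    by (rule card_Int_Diff[OF fX])
  have cY: "card Y = card (X \<inter> Y) + card (Y - X)"
    using card_Int_Diff[OF fY, of X] by (simp add: Int_commute)
  have "card (invs p (S \<union> T)) + card Y = (card X + card (invs p S) + card (invs p T)) + 2 * card (Y - X)"
    using cST cX cY by simp
  then have "((-1::'a) ^ card (invs p (S \<union> T))) * (-1) ^ card Y
      = (-1) ^ ((card X + card (invs p S) + card (invs p T)) + 2 * card (Y - X))"
    by (simp only: power_add[symmetric])
  also have "\<dots> = (-1) ^ card X * (-1) ^ card (invs p S) * (-1) ^ card (invs p T)"
    by (simp add: power_add power_mult)
  finally have "((-1::'a) ^ card (invs p (S \<union> T))) * (-1) ^ card Y
      = (-1) ^ card X * (-1) ^ card (invs p S) * (-1) ^ card (invs p T)" .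
  then show ?thesis unfolding g1 g2 psgn_def by (simp add: algebra_simps)
qed

definition pmap :: "(nat \<Rightarrow> nat) \<Rightarrow> ('a::field_char_0) grass \<Rightarrow> 'a grass" where
  "pmap p x = (\<lambda>U. psgn p (inv_into UNIV p ` U) * x (inv_into UNIV p ` U))"

lemma psgn_sq: "psgn p S * psgn p S = (1::'a::field_char_0)"
  unfolding psgn_def by (simp flip: power_mult_distrib)

lemma psgn_nz: "psgn p S \<noteq> (0::'a::field_char_0)"
  using psgn_sq[of p S, where 'a='a] by auto

lemma psgn_single[simp]: "psgn p {i} = 1"
proof -
  have "invs p {i} = {}" by (auto simp: invs_def)
  then show ?thesis by (simp add: psgn_def)
qed

lemma psgn_fix: "(\<And>i. i \<in> S \<Longrightarrow> p i = i) \<Longrightarrow> psgn p S = 1"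
proof -
  assume h: "\<And>i. i \<in> S \<Longrightarrow> p i = i"
  have "invs p S = {}" using h by (auto simp: invs_def)
  then show ?thesis by (simp add: psgn_def)
qed

context
  fixes p :: "nat \<Rightarrow> nat"
  assumes bp: "bij p" and p0: "p 0 = 0"
begin

lemma pinj: "inj p" using bp by (simp add: bij_def)
lemma qp: "inv_into UNIV p (p x) = x" using pinj by (simp add: inv_into_f_f)
lemma pq: "p (inv_into UNIV p y) = y" using bp by (simp add: bij_def f_inv_into_f)
lemma qpS: "inv_into UNIV p ` p ` S = S" by (simp add: image_image qp)
lemma pqS: "p ` inv_into UNIV p ` S = S" by (simp add: image_image pq)
lemma q0: "inv_into UNIV p 0 = 0" using qp[of 0] p0 by simp

lemma pmap_carrier: assumes x: "x \<in> grass_carrier" shows "pmap p x \<in> grass_carrier"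
proof -
  have sub: "{U. pmap p x U \<noteq> 0} \<subseteq> (\<lambda>S. p ` S) ` {S. x S \<noteq> 0}"
  proof
    fix U assume "U \<in> {U. pmap p x U \<noteq> 0}"
    then have "x (inv_into UNIV p ` U) \<noteq> 0" by (auto simp: pmap_def)
    then show "U \<in> (\<lambda>S. p ` S) ` {S. x S \<noteq> 0}" by (intro image_eqI[of _ _ "inv_into UNIV p ` U"]) (auto simp: pqS)
  qed
  have "finite {U. pmap p x U \<noteq> 0}"
    using x by (intro finite_subset[OF sub]) (auto simp: grass_carrier_def)
  moreover have "finite U \<and> 0 \<notin> U" if "pmap p x U \<noteq> 0" for U
  proof -
    have h: "x (inv_into UNIV p ` U) \<noteq> 0" using that by (auto simp: pmap_def)
    then have "finite (inv_into UNIV p ` U)" "0 \<notin> inv_into UNIV p ` U" using x by (auto simp: grass_carrier_def)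
    then have "finite (p ` inv_into UNIV p ` U)" "0 \<notin> U" using q0 by (auto intro: image_eqI[of 0 _ 0])
    then show ?thesis by (simp add: pqS)
  qed
  ultimately show ?thesis by (auto simp: grass_carrier_def)
qed

lemma pmap_aut: "grass_aut (pmap p :: ('a::field_char_0) grass \<Rightarrow> 'a grass)"
proof -
  have inj: "inj_on (pmap p :: 'a grass \<Rightarrow> 'a grass) grass_carrier"
  proof (rule inj_onI)
    fix x y :: "'a grass" assume e: "pmap p x = pmap p y"
    show "x = y"
    proof
      fix S
      have "pmap p x (p ` S) = pmap p y (p ` S)" using e by simp
      then have "psgn p S * x S = psgn p S * y S" by (simp add: pmap_def qpS)
      then show "x S = y S" using psgn_nz[of p S, where 'a='a] by simp
    qed
  qed
  have surj: "(pmap p :: 'a grass \<Rightarrow> 'a grass) ` grass_carrier = grass_carrier"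
  proof
    show "pmap p ` grass_carrier \<subseteq> (grass_carrier :: 'a grass set)" using pmap_carrier by auto
  next
    show "grass_carrier \<subseteq> (pmap p ` grass_carrier :: 'a grass set)"
    proof
      fix y :: "'a grass" assume y: "y \<in> grass_carrier"
      define x where "x = (\<lambda>S. psgn p S * y (p ` S))"
      have sub: "{S. x S \<noteq> 0} \<subseteq> (\<lambda>U. inv_into UNIV p ` U) ` {U. y U \<noteq> 0}"
      proof
        fix S assume "S \<in> {S. x S \<noteq> 0}"
        then have "y (p ` S) \<noteq> 0" by (auto simp: x_def)
        then show "S \<in> (\<lambda>U. inv_into UNIV p ` U) ` {U. y U \<noteq> 0}"
          by (intro image_eqI[of _ _ "p ` S"]) (simp_all add: qpS)
      qed
      have "finite {S. x S \<noteq> 0}"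
        using y by (intro finite_subset[OF sub]) (auto simp: grass_carrier_def)
      moreover have "finite S \<and> 0 \<notin> S" if "x S \<noteq> 0" for S
      proof -
        have "y (p ` S) \<noteq> 0" using that by (auto simp: x_def)
        then have "finite (p ` S)" "0 \<notin> p ` S" using y by (auto simp: grass_carrier_def)
        have "inj_on p S" using pinj by (rule inj_on_subset) simp
        then have "finite S" using \<open>finite (p ` S)\<close> finite_imageD by blast
        moreover have "0 \<notin> S"
        proof
          assume "0 \<in> S" then have "p 0 \<in> p ` S" by (rule imageI)
          then show False using p0 \<open>0 \<notin> p ` S\<close> by simp
        qed
        ultimately show ?thesis by simp
      qed
      ultimately have "x \<in> grass_carrier" by (auto simp: grass_carrier_def)
      moreover have "pmap p x = y"
      proof
        fix U
        have "pmap p x U = (psgn p (inv_into UNIV p ` U) * psgn p (inv_into UNIV p ` U)) * y U"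
          by (simp add: pmap_def x_def pqS)
        then show "pmap p x U = y U" by (simp add: psgn_sq)
      qed
      ultimately show "y \<in> pmap p ` grass_carrier" by blast
    qed
  qed
  have mul: "pmap p (gmult x y) = gmult (pmap p x) (pmap p y)" for x y :: "'a grass"
  proof
    fix U
    define V where "V = inv_into UNIV p ` U"
    have UV: "U = p ` V" by (simp add: V_def pqS)
    show "pmap p (gmult x y) U = gmult (pmap p x) (pmap p y) U"
    proof (cases "finite U")
      case True
      then have fV: "finite V" by (simp add: V_def)
      have P: "Pow U = (\<lambda>S. p ` S) ` Pow V"
      proof
        show "Pow U \<subseteq> (\<lambda>S. p ` S) ` Pow V"
        proof
          fix S assume "S \<in> Pow U"
          then show "S \<in> (\<lambda>S. p ` S) ` Pow V"
            by (intro image_eqI[of _ _ "inv_into UNIV p ` S"]) (auto simp: pqS V_def)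
        qed
      qed (auto simp: UV)
      have ij: "inj_on (\<lambda>S. p ` S) (Pow V)"
        using pinj by (auto simp: inj_on_def inj_image_eq_iff)
      have "gmult (pmap p x) (pmap p y) U =
         (\<Sum>S\<in>Pow U. gsign S (U - S) * pmap p x S * pmap p y (U - S))"
        using True by (simp add: gmult_def)
      also have "\<dots> = (\<Sum>S\<in>Pow V. gsign (p ` S) (U - p ` S) * pmap p x (p ` S) * pmap p y (U - p ` S))"
        unfolding P by (subst sum.reindex[OF ij]) (simp add: o_def)
      also have "\<dots> = (\<Sum>S\<in>Pow V. psgn p V * (gsign S (V - S) * x S * y (V - S)))"
      proof (rule sum.cong)
        fix S assume S: "S \<in> Pow V"
        have d: "U - p ` S = p ` (V - S)" unfolding UV by (simp add: image_set_diff[OF pinj])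
        have fS: "finite S" using S fV finite_subset by auto
        have un: "S \<union> (V - S) = V" using S by auto
        have sm: "gsign (p ` S) (p ` (V - S)) * psgn p S * psgn p (V - S) = (psgn p V * gsign S (V - S) :: 'a)"
          using sign_mult[OF pinj fS, of "V - S"] fV un by auto
        show "gsign (p ` S) (U - p ` S) * pmap p x (p ` S) * pmap p y (U - p ` S) =
            psgn p V * (gsign S (V - S) * x S * y (V - S))"
          unfolding d pmap_def qpS using sm by (simp add: algebra_simps)
      qed simp
      also have "\<dots> = pmap p (gmult x y) U"
        using fV by (simp add: pmap_def gmult_def sum_distrib_left V_def)
      finally show ?thesis ..
    next
      case False
      then have "infinite V" using UV by auto
      then show ?thesis using False by (simp add: pmap_def gmult_def V_def)
    qed
  qed
  show ?thesis unfolding grass_aut_def bij_betw_def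
    using inj surj mul by (auto simp: pmap_def gadd_def gsmult_def algebra_simps)
qed

lemma pmap_gen: "pmap p (gen i) = gen (p i)"
proof
  fix U
  have "inv_into UNIV p ` U = {i} \<longleftrightarrow> U = {p i}"
    by (metis image_empty image_insert pqS qp)
  then show "pmap p (gen i) U = gen (p i) U"
    by (auto simp: pmap_def gen_def psgn_fix)
qed

lemma pmap_fix:
  assumes h: "\<And>S i. x S \<noteq> 0 \<Longrightarrow> i \<in> S \<Longrightarrow> p i = i"
  shows "pmap p x = x"
proof
  fix U
  show "pmap p x U = x U"
  proof (cases "x (inv_into UNIV p ` U) = 0")
    case False
    then have "\<And>i. i \<in> inv_into UNIV p ` U \<Longrightarrow> p i = i" using h by blast
    then have "inv_into UNIV p ` U = U" using pq by (force simp: image_iff)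
    then show ?thesis using False h by (simp add: pmap_def psgn_fix)
  next
    case True
    show ?thesis
    proof (cases "x U = 0")
      case False
      then have "\<And>i. i \<in> U \<Longrightarrow> inv_into UNIV p i = i" using h qp by metis
      then have "inv_into UNIV p ` U = U" by force
      then show ?thesis using True False by simp
    qed (simp add: pmap_def True)
  qed
qed

end

definition img :: "(nat \<Rightarrow> ('a::field_char_0) grass) \<Rightarrow> nat \<Rightarrow> 'a grass" where
  "img P j = gadd (gsmult (-1) (gen j)) (gsmult 2 (P j))"

definition acts :: "(nat \<Rightarrow> ('a::field_char_0) grass) \<Rightarrow> ('a grass \<Rightarrow> 'a grass) \<Rightarrow> nat set \<Rightarrow> bool" where
  "acts P \<phi> A \<longleftrightarrow> (\<forall>i. 1 \<le> i \<longrightarrow> \<phi> (gen i) = (if i \<in> A then img P i else gen i))"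

definition HH :: "(nat \<Rightarrow> ('a::field_char_0) grass) \<Rightarrow> nat \<Rightarrow> ('a grass \<Rightarrow> 'a grass) set" where
  "HH P N = {\<phi> \<in> Bij grass_carrier. ghom \<phi> \<and> (\<exists>A \<subseteq> {1..N}. acts P \<phi> A)}"

lemma img_inv: "gadd (gsmult (-1) (img P i)) (gsmult 2 (P i)) = gen i"
  by (auto simp: img_def gadd_def gsmult_def intro!: ext)

lemma ghom_bij_aut: "ghom f \<Longrightarrow> bij_betw f grass_carrier grass_carrier \<Longrightarrow> grass_aut f"
  unfolding ghom_def grass_aut_def by auto

lemma aut_comp: "grass_aut f \<Longrightarrow> grass_aut g \<Longrightarrow> grass_aut (f \<circ> g)"
  using ghom_comp[OF aut_ghom aut_ghom] bij_betw_trans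
  by (metis ghom_bij_aut grass_aut_def)

lemma carrier_supp: "x \<in> grass_carrier \<Longrightarrow> x S \<noteq> 0 \<Longrightarrow> S \<subseteq> {i. 1 \<le> i}"
proof
  fix y assume "x \<in> grass_carrier" "x S \<noteq> 0" "y \<in> S"
  then have "0 \<notin> S" unfolding grass_carrier_def by blast
  then have "y \<noteq> 0" using \<open>y \<in> S\<close> by metis
  then show "y \<in> {i. 1 \<le> i}" by (cases y) auto
qed

lemma id_ghom: "ghom (\<lambda>x\<in>grass_carrier. x)"
  by (rule ghom_cong[OF ghom_id]) simp

lemma Bij_ghom_eq:
  assumes "f \<in> Bij grass_carrier" "g \<in> Bij grass_carrier" "ghom f" "ghom g"
    and "\<And>i. 1 \<le> i \<Longrightarrow> f (gen i) = g (gen i)"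
  shows "f = g"
proof (rule extensionalityI)
  show "f \<in> extensional grass_carrier" "g \<in> extensional grass_carrier"
    using assms by (auto simp: Bij_def)
  fix x :: "'a grass" assume x: "x \<in> grass_carrier"
  show "f x = g x"
    by (rule ghom_agree[OF assms(3,4), of "{i. 1 \<le> i}"]) (use assms(5) x carrier_supp in auto)
qed

context
  fixes T :: "nat \<Rightarrow> ('a::field_char_0) grass \<Rightarrow> 'a grass"
    and P :: "nat \<Rightarrow> 'a grass" and N :: nat
  assumes tri: "\<And>j. j \<in> {1..N} \<Longrightarrow> triangular_aut j (T j) (P j)"
    and Pav: "\<And>j. j \<in> {1..N} \<Longrightarrow> P j \<in> grass_avoid N \<inter> grass_odd"
begin

lemma P_car: "j \<in> {1..N} \<Longrightarrow> P j \<in> grass_carrier"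
  using Pav by (auto simp: grass_avoid_def)

lemma P_supp: "j \<in> {1..N} \<Longrightarrow> P j S \<noteq> 0 \<Longrightarrow> i \<in> S \<Longrightarrow> N < i"
proof -
  assume j: "j \<in> {1..N}" and S: "P j S \<noteq> 0" and i: "i \<in> S"
  have "S \<inter> {1..N} = {}" "0 \<notin> S" using Pav[OF j] S by (auto simp: grass_avoid_def grass_carrier_def)
  then show "N < i" using i by (cases i) auto
qed

lemma img_car: "j \<in> {1..N} \<Longrightarrow> img P j \<in> grass_carrier"
  unfolding img_def by (intro carrier_gadd carrier_gsmult carrier_gen P_car) auto

lemma img_ne: "j \<in> {1..N} \<Longrightarrow> img P j \<noteq> gen j"
proof
  assume j: "j \<in> {1..N}" and e: "img P j = gen j"
  have "P j {j} = 0" using P_supp[OF j, of "{j}" j] j by auto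
  then have "img P j {j} = -1" by (simp add: img_def gadd_def gsmult_def gen_def)
  moreover have "gen j {j} = (1::'a)" by (simp add: gen_def)
  ultimately show False using e by simp
qed

lemma fixP:
  assumes "ghom \<phi>" "\<And>i. N < i \<Longrightarrow> \<phi> (gen i) = gen i" "j \<in> {1..N}"
  shows "\<phi> (P j) = P j"
proof -
  have "\<And>S. P j S \<noteq> 0 \<Longrightarrow> S \<subseteq> {i. N < i}" using P_supp[OF assms(3)] by blast
  then show ?thesis using ghom_agree[OF assms(1) ghom_id, of "{i. N < i}"] assms P_car by auto
qed

lemma acts_big: "acts P \<phi> A \<Longrightarrow> A \<subseteq> {1..N} \<Longrightarrow> N < i \<Longrightarrow> \<phi> (gen i) = gen i"
  unfolding acts_def by auto

lemma T_props: "j \<in> {1..N} \<Longrightarrow> T j \<in> HH P N \<and> acts P (T j) {j}"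
proof -
  assume j: "j \<in> {1..N}"
  have t: "triangular_aut j (T j) (P j)" by (rule tri[OF j])
  then have "T j \<in> Bij grass_carrier" by (auto simp: triangular_aut_def Bij_def grass_aut_def)
  moreover have "ghom (T j)" using t by (auto simp: triangular_aut_def intro: aut_ghom)
  moreover have "acts P (T j) {j}" using t by (auto simp: triangular_aut_def acts_def img_def)
  moreover have "{j} \<subseteq> {1..N}" using j by auto
  ultimately show ?thesis unfolding HH_def by blast
qed

lemma comp_acts:
  assumes f: "ghom \<phi>" "acts P \<phi> A" "A \<subseteq> {1..N}" and g: "ghom \<psi>" "acts P \<psi> B" "B \<subseteq> {1..N}"
  shows "acts P (compose grass_carrier \<phi> \<psi>) ((A - B) \<union> (B - A))"
  unfolding acts_def
proof (intro allI impI)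
  fix i :: nat assume i: "1 \<le> i"
  have c: "compose grass_carrier \<phi> \<psi> (gen i) = \<phi> (\<psi> (gen i))"
    using carrier_gen[OF i] by (rule compose_eq)
  show "compose grass_carrier \<phi> \<psi> (gen i) = (if i \<in> (A - B) \<union> (B - A) then img P i else gen i)"
  proof (cases "i \<in> B")
    case True
    then have iN: "i \<in> {1..N}" using g by auto
    have "\<phi> (img P i) = gadd (\<phi> (gsmult (-1) (gen i))) (\<phi> (gsmult 2 (P i)))"
      unfolding img_def
      by (rule ghomD(2)[OF f(1)]) (intro carrier_gsmult carrier_gen P_car iN i)+
    also have "\<dots> = gadd (gsmult (-1) (\<phi> (gen i))) (gsmult 2 (\<phi> (P i)))"
      by (simp only: ghomD(3)[OF f(1) carrier_gen[OF i]] ghomD(3)[OF f(1) P_car[OF iN]])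
    finally have "\<phi> (img P i) = gadd (gsmult (-1) (\<phi> (gen i))) (gsmult 2 (P i))"
      using fixP[OF f(1) acts_big[OF f(2,3)] iN] by simp
    then show ?thesis using True g(2) f(2) i c img_inv[of P i] unfolding acts_def by (auto simp: img_def)
  next
    case False
    then show ?thesis using g(2) f(2) i c unfolding acts_def by auto
  qed
qed

lemma HH_comp: "\<phi> \<in> HH P N \<Longrightarrow> \<psi> \<in> HH P N \<Longrightarrow> compose grass_carrier \<phi> \<psi> \<in> HH P N"
proof -
  assume f: "\<phi> \<in> HH P N" and g: "\<psi> \<in> HH P N"
  obtain A B where AB: "A \<subseteq> {1..N}" "acts P \<phi> A" "B \<subseteq> {1..N}" "acts P \<psi> B"
    using f g by (auto simp: HH_def)
  have "ghom (compose grass_carrier \<phi> \<psi>)"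
    by (rule ghom_cong[OF ghom_comp[of \<phi> \<psi>]]) (use f g in \<open>auto simp: HH_def compose_def\<close>)
  moreover have "compose grass_carrier \<phi> \<psi> \<in> Bij grass_carrier"
    using f g by (auto simp: HH_def intro: compose_Bij)
  moreover have "acts P (compose grass_carrier \<phi> \<psi>) ((A - B) \<union> (B - A))"
    using comp_acts[of \<phi> A \<psi> B] f g AB by (auto simp: HH_def)
  moreover have "(A - B) \<union> (B - A) \<subseteq> {1..N}" using AB by auto
  ultimately show ?thesis unfolding HH_def by blast
qed

lemma HH_eq: "\<phi> \<in> HH P N \<Longrightarrow> \<psi> \<in> HH P N \<Longrightarrow> acts P \<phi> A \<Longrightarrow> acts P \<psi> A \<Longrightarrow> \<phi> = \<psi>"
  by (rule Bij_ghom_eq) (auto simp: HH_def acts_def)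

lemma id_HH: "(\<lambda>x\<in>grass_carrier. x) \<in> HH P N \<and> acts P (\<lambda>x\<in>grass_carrier. x) {}"
  using id_ghom carrier_gen by (auto simp: HH_def acts_def id_Bij)

lemma HH_acts_obtain: "\<phi> \<in> HH P N \<Longrightarrow> \<exists>A. A \<subseteq> {1..N} \<and> acts P \<phi> A"
  by (auto simp: HH_def)

lemma HH_sq: "\<phi> \<in> HH P N \<Longrightarrow> compose grass_carrier \<phi> \<phi> = (\<lambda>x\<in>grass_carrier. x)"
proof -
  assume f: "\<phi> \<in> HH P N"
  obtain A where A: "A \<subseteq> {1..N}" "acts P \<phi> A" using f by (auto simp: HH_def)
  have "acts P (compose grass_carrier \<phi> \<phi>) {}"
    using comp_acts[of \<phi> A \<phi> A] f A by (auto simp: HH_def)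
  then show ?thesis using HH_eq[OF HH_comp[OF f f]] id_HH by blast
qed

lemma HH_commute: "\<phi> \<in> HH P N \<Longrightarrow> \<psi> \<in> HH P N \<Longrightarrow>
    compose grass_carrier \<phi> \<psi> = compose grass_carrier \<psi> \<phi>"
proof -
  assume f: "\<phi> \<in> HH P N" and g: "\<psi> \<in> HH P N"
  obtain A B where AB: "A \<subseteq> {1..N}" "acts P \<phi> A" "B \<subseteq> {1..N}" "acts P \<psi> B"
    using f g by (auto simp: HH_def)
  have "acts P (compose grass_carrier \<phi> \<psi>) ((A - B) \<union> (B - A))"
    using comp_acts[of \<phi> A \<psi> B] f g AB by (auto simp: HH_def)
  moreover have "acts P (compose grass_carrier \<psi> \<phi>) ((A - B) \<union> (B - A))"
    using comp_acts[of \<psi> B \<phi> A] f g AB by (auto simp: HH_def Un_commute)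
  ultimately show ?thesis using HH_eq[OF HH_comp[OF f g] HH_comp[OF g f]] by blast
qed

lemma acts_unique: "acts P \<phi> A \<Longrightarrow> A \<subseteq> {1..N} \<Longrightarrow> {i \<in> {1..N}. \<phi> (gen i) \<noteq> gen i} = A"
  unfolding acts_def using img_ne by auto

lemma gen_sub: "tau_group T N \<subseteq> HH P N"
proof
  fix h assume "h \<in> tau_group T N"
  then show "h \<in> HH P N" unfolding tau_group_def
  proof (induction rule: generate.induct)
    case one then show ?case using id_HH by (simp add: BijGroup_def restrict_def)
  next
    case (incl h) then show ?case using T_props by auto
  next
    case (inv h)
    then obtain j where j: "j \<in> {1..N}" "h = T j" by auto
    have hH: "h \<in> HH P N" using T_props j by auto
    have hB: "h \<in> carrier (BijGroup grass_carrier)" using hH by (simp add: HH_def BijGroup_def)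
    have "h \<otimes>\<^bsub>BijGroup grass_carrier\<^esub> h = \<one>\<^bsub>BijGroup grass_carrier\<^esub>"
      using HH_sq[OF hH] hB by (simp add: BijGroup_def)
    then have "inv\<^bsub>BijGroup grass_carrier\<^esub> h = h"
      using group.inv_equality[OF group_BijGroup] hB by blast
    then show ?case using hH by simp
  next
    case (eng h1 h2)
    then show ?case using HH_comp by (simp add: BijGroup_def HH_def)
  qed
qed

lemma exists_acts: "A \<subseteq> {1..N} \<Longrightarrow> \<exists>\<phi>\<in>tau_group T N. acts P \<phi> A"
proof -
  assume A: "A \<subseteq> {1..N}"
  have "finite A" using A finite_subset by blast
  then show ?thesis using A
  proof (induction A rule: finite_induct)
    case empty
    have "\<one>\<^bsub>BijGroup grass_carrier\<^esub> \<in> tau_group T N" unfolding tau_group_def by (rule generate.one)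
    then show ?case using id_HH by (auto simp: BijGroup_def)
  next
    case (insert a A)
    then obtain \<phi> where f: "\<phi> \<in> tau_group T N" "acts P \<phi> A" by auto
    have a: "a \<in> {1..N}" using insert by auto
    have Ta: "T a \<in> tau_group T N" unfolding tau_group_def using a by (intro generate.incl) auto
    have fH: "\<phi> \<in> HH P N" using gen_sub f by auto
    have TaH: "T a \<in> HH P N" "acts P (T a) {a}" using T_props[OF a] by auto
    have "T a \<otimes>\<^bsub>BijGroup grass_carrier\<^esub> \<phi> \<in> tau_group T N"
      unfolding tau_group_def by (rule generate.eng) (use Ta f in \<open>auto simp: tau_group_def\<close>)
    moreover have "T a \<otimes>\<^bsub>BijGroup grass_carrier\<^esub> \<phi> = compose grass_carrier (T a) \<phi>"
      using fH TaH by (simp add: BijGroup_def HH_def)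
    moreover have "acts P (compose grass_carrier (T a) \<phi>) (({a} - A) \<union> (A - {a}))"
      using comp_acts[of "T a" "{a}" \<phi> A] TaH fH f insert by (auto simp: HH_def)
    moreover have "({a} - A) \<union> (A - {a}) = insert a A" using insert by auto
    ultimately show ?case by metis
  qed
qed

lemma tau_card: "card (tau_group T N) = 2 ^ N"
proof -
  define f where "f = (\<lambda>\<phi>::'a grass \<Rightarrow> 'a grass. {i \<in> {1..N}. \<phi> (gen i) \<noteq> gen i})"
  have fa: "f \<phi> = A" if "acts P \<phi> A" "A \<subseteq> {1..N}" for \<phi> A
    using acts_unique that by (simp add: f_def)
  have "bij_betw f (tau_group T N) (Pow {1..N})"
    unfolding bij_betw_def
  proof
    show "inj_on f (tau_group T N)"
    proof (rule inj_onI)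
      fix \<phi> \<psi> assume a: "\<phi> \<in> tau_group T N" "\<psi> \<in> tau_group T N" "f \<phi> = f \<psi>"
      then have H: "\<phi> \<in> HH P N" "\<psi> \<in> HH P N" using gen_sub by auto
      obtain A B where AB: "A \<subseteq> {1..N}" "acts P \<phi> A" "B \<subseteq> {1..N}" "acts P \<psi> B"
        using H by (auto simp: HH_def)
      then have "A = B" using fa a(3) by metis
      then show "\<phi> = \<psi>" using HH_eq[OF H] AB by blast
    qed
    show "f ` tau_group T N = Pow {1..N}"
    proof
      show "f ` tau_group T N \<subseteq> Pow {1..N}" by (auto simp: f_def)
      show "Pow {1..N} \<subseteq> f ` tau_group T N"
      proof
        fix A assume "A \<in> Pow {1..N}"
        then obtain \<phi> where "\<phi> \<in> tau_group T N" "acts P \<phi> A" "A \<subseteq> {1..N}" using exists_acts by blast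
        then show "A \<in> f ` tau_group T N" using fa by blast
      qed
    qed
  qed
  then have "card (tau_group T N) = card (Pow {1..N})" by (rule bij_betw_same_card)
  then show ?thesis by (simp add: card_Pow)
qed

lemma comp_list_HH: "distinct js \<Longrightarrow> set js \<subseteq> {1..N} \<Longrightarrow>
    comp_list T js \<in> HH P N \<and> acts P (comp_list T js) (set js)"
proof (induction js)
  case Nil
  then show ?case using id_HH by (simp add: comp_list_def restrict_def)
next
  case (Cons j js)
  then have IH: "comp_list T js \<in> HH P N" "acts P (comp_list T js) (set js)" and j: "j \<in> {1..N}" "j \<notin> set js"
    by auto
  have e: "comp_list T (j # js) = compose grass_carrier (T j) (comp_list T js)"
    by (simp add: comp_list_def)
  have "acts P (comp_list T (j # js)) (({j} - set js) \<union> (set js - {j}))"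
    unfolding e using comp_acts[of "T j" "{j}" "comp_list T js" "set js"] T_props[OF j(1)] IH Cons.prems
    by (auto simp: HH_def)
  moreover have "({j} - set js) \<union> (set js - {j}) = set (j # js)" using j by auto
  ultimately show ?case using HH_comp[OF conjunct1[OF T_props[OF j(1)]] IH(1)] e by simp
qed

end

lemma perm_exists:
  assumes A: "A \<subseteq> {1..N}"
  shows "\<exists>p. bij p \<and> p 0 = 0 \<and> p ` A = {1..card A} \<and> (\<forall>i. N < i \<longrightarrow> p i = i)"
proof -
  define s where "s = card A"
  have fA: "finite A" using finite_subset[OF A] by simp
  have sN: "s \<le> N" using card_mono[OF _ A] by (simp add: s_def)
  have "\<exists>h. bij_betw h A {1..s}"
    by (rule finite_same_card_bij[OF fA]) (simp_all add: s_def)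
  then obtain h where h: "bij_betw h A {1..s}" by blast
  have c: "card ({1..N} - A) = card ({1..N} - {1..s})"
    using A sN by (simp add: card_Diff_subset fA s_def)
  have "\<exists>g. bij_betw g ({1..N} - A) ({1..N} - {1..s})"
    by (rule finite_same_card_bij[OF _ _ c]) simp_all
  then obtain g where g: "bij_betw g ({1..N} - A) ({1..N} - {1..s})" by blast
  define p where "p = (\<lambda>i. if i \<in> A then h i else if i \<in> {1..N} then g i else i)"
  have b1: "bij_betw p A {1..s}" using h by (rule bij_betw_cong[THEN iffD1, rotated]) (simp add: p_def)
  have b2: "bij_betw p ({1..N} - A) ({1..N} - {1..s})"
    using g by (rule bij_betw_cong[THEN iffD1, rotated]) (simp add: p_def)
  have b3: "bij_betw p (- {1..N}) (- {1..N})"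
    by (rule bij_betw_cong[THEN iffD1, rotated, OF bij_betw_id]) (use A in \<open>auto simp: p_def\<close>)
  have "bij_betw p (A \<union> ({1..N} - A)) ({1..s} \<union> ({1..N} - {1..s}))"
    by (rule bij_betw_combine[OF b1 b2]) auto
  then have "bij_betw p (A \<union> ({1..N} - A) \<union> - {1..N}) ({1..s} \<union> ({1..N} - {1..s}) \<union> - {1..N})"
    by (rule bij_betw_combine[OF _ b3]) (use sN in auto)
  moreover have "A \<union> ({1..N} - A) \<union> - {1..N} = UNIV" by auto
  moreover have "{1..s} \<union> ({1..N} - {1..s}) \<union> - {1..N} = UNIV" by auto
  ultimately have "bij p" by simp
  moreover have "p 0 = 0" using A by (auto simp: p_def)
  moreover have "p ` A = {1..s}" using b1 by (simp add: bij_betw_def)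
  moreover have "\<forall>i. N < i \<longrightarrow> p i = i" using A by (auto simp: p_def)
  ultimately show ?thesis unfolding s_def by blast
qed

lemma prod_sign: "finite U \<Longrightarrow> (\<Prod>i\<in>U. (if i \<in> B then -1 else 1)) = ((-1::'a::field_char_0) ^ card (U \<inter> B))"
  by (simp add: prod.If_cases Int_def)

lemma neg1_pow_eq1: "((-1::'a::field_char_0) ^ n = 1) \<longleftrightarrow> even n"
  by (cases "even n") auto

lemma neg1_pow_eqm1: "((-1::'a::field_char_0) ^ n = -1) \<longleftrightarrow> odd n"
  by (cases "even n") auto

lemma pt0:
  assumes y: "y \<in> grass_carrier"
  shows "((\<Prod>i\<in>S. (if i \<in> {1..s} then -1 else 1)) * y S = y S) \<longleftrightarrow> (y S \<noteq> 0 \<longrightarrow> even (card (S \<inter> {1..s})))"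
proof (cases "finite S")
  case True
  then have "(\<Prod>i\<in>S. (if i \<in> {1..s} then -1 else 1)) = ((-1::'a) ^ card (S \<inter> {1..s}))"
    by (rule prod_sign)
  then show ?thesis by (cases "even (card (S \<inter> {1..s}))") auto
qed (simp add: carrier_inf[OF y])

lemma pt1:
  assumes y: "y \<in> grass_carrier"
  shows "((\<Prod>i\<in>S. (if i \<in> {1..s} then -1 else 1)) * y S = -1 * y S) \<longleftrightarrow> (y S \<noteq> 0 \<longrightarrow> odd (card (S \<inter> {1..s})))"
proof (cases "finite S")
  case True
  then have "(\<Prod>i\<in>S. (if i \<in> {1..s} then -1 else 1)) = ((-1::'a) ^ card (S \<inter> {1..s}))"
    by (rule prod_sign)
  then show ?thesis by (cases "even (card (S \<inter> {1..s}))") auto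
qed (simp add: carrier_inf[OF y])

lemma sstar0_char: "sstar_deg0 s = {y \<in> grass_carrier. diag (\<lambda>i. if i \<in> {1..s} then -1 else 1) y = y}"
  unfolding sstar_deg0_def diag_def fun_eq_iff using pt0 by blast

lemma sstar1_char: "sstar_deg1 s = {y \<in> grass_carrier. diag (\<lambda>i. if i \<in> {1..s} then -1 else 1) y = gsmult (-1) y}"
  unfolding sstar_deg1_def diag_def gsmult_def fun_eq_iff using pt1 by blast

context
  fixes T :: "nat \<Rightarrow> ('a::field_char_0) grass \<Rightarrow> 'a grass"
    and P :: "nat \<Rightarrow> 'a grass" and N :: nat
  assumes tri: "\<And>j. j \<in> {1..N} \<Longrightarrow> triangular_aut j (T j) (P j)"
    and Pav: "\<And>j. j \<in> {1..N} \<Longrightarrow> P j \<in> grass_avoid N \<inter> grass_odd"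
begin

lemma z2_main:
  assumes fH: "\<phi> \<in> HH P N" and act: "acts P \<phi> A" and A: "A \<subseteq> {1..N}"
  shows "z2_iso (phi_deg0 \<phi>) (phi_deg1 \<phi>) (sstar_deg0 (card A)) (sstar_deg1 (card A))"
proof -
  define s where "s = card A"
  obtain p where p: "bij p" "p 0 = 0" "p ` A = {1..s}" "\<forall>i. N < i \<longrightarrow> p i = i"
    using perm_exists[OF A] unfolding s_def by blast
  define ch :: "nat \<Rightarrow> 'a" where "ch = (\<lambda>i. if i \<in> A then 1/2 else 1)"
  define cm :: "nat \<Rightarrow> 'a" where "cm = (\<lambda>i. if i \<in> A then -2 else 1)"
  define cs :: "nat \<Rightarrow> 'a" where "cs = (\<lambda>i. if i \<in> {1..s} then -1 else 1)"
  define \<psi> where "\<psi> = pmap p \<circ> diag cm \<circ> \<phi> \<circ> diag ch"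
  have fhom: "ghom \<phi>" using fH by (simp add: HH_def)
  have faut: "grass_aut \<phi>" using fH by (intro ghom_bij_aut) (auto simp: HH_def Bij_def)
  have chA: "grass_aut (diag ch)" by (rule diag_aut) (simp add: ch_def)
  have cmA: "grass_aut (diag cm)" by (rule diag_aut) (simp add: cm_def)
  have csA: "grass_aut (diag cs)" by (rule diag_aut) (simp add: cs_def)
  have pA: "grass_aut (pmap p :: 'a grass \<Rightarrow> 'a grass)" by (rule pmap_aut[OF p(1,2)])
  have psiA: "grass_aut \<psi>" unfolding \<psi>_def by (intro aut_comp pA cmA faut chA)
  have psih: "ghom \<psi>" by (rule aut_ghom[OF psiA])
  have csh: "ghom (diag cs)" by (rule aut_ghom[OF csA])
  have cmh: "ghom (diag cm)" by (rule aut_ghom[OF cmA])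
  have ph: "ghom (pmap p :: 'a grass \<Rightarrow> 'a grass)" by (rule aut_ghom[OF pA])
  have sN: "s \<le> N" using card_mono[OF _ A] by (simp add: s_def)
  have Pfix: "\<psi> (P j) = P j" "diag cs (P j) = P j" if j: "j \<in> {1..N}" for j
  proof -
    have big: "\<And>S i. P j S \<noteq> 0 \<Longrightarrow> i \<in> S \<Longrightarrow> N < i" using P_supp[OF tri Pav j] by blast
    have "diag ch (P j) = P j" proof (rule diag_fix)
      fix S i assume "P j S \<noteq> 0" "i \<in> S"
      then have "N < i" by (rule big)
      then have "i \<notin> A" using A by auto
      then show "ch i = 1" by (simp add: ch_def)
    qed
    moreover have "diag cm (P j) = P j" proof (rule diag_fix)
      fix S i assume "P j S \<noteq> 0" "i \<in> S"
      then have "N < i" by (rule big)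
      then have "i \<notin> A" using A by auto
      then show "cm i = 1" by (simp add: cm_def)
    qed
    moreover have "\<phi> (P j) = P j" by (rule fixP[OF tri Pav fhom acts_big[OF tri Pav act A] j])
    moreover have "pmap p (P j) = P j" by (rule pmap_fix[OF p(1,2)]) (use big p(4) in blast)
    ultimately show "\<psi> (P j) = P j" by (simp add: \<psi>_def)
    show "diag cs (P j) = P j" proof (rule diag_fix)
      fix S i assume "P j S \<noteq> 0" "i \<in> S"
      then have "N < i" by (rule big)
      then have "i \<notin> {1..s}" using sN by auto
      then show "cs i = 1" by (simp add: cs_def)
    qed
  qed
  have cmfix: "diag cm (P j) = P j" if j: "j \<in> {1..N}" for j
  proof -
    have big: "\<And>S i. P j S \<noteq> 0 \<Longrightarrow> i \<in> S \<Longrightarrow> N < i" using P_supp[OF tri Pav j] by blast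
    show ?thesis proof (rule diag_fix)
      fix S i assume "P j S \<noteq> 0" "i \<in> S"
      then have "N < i" by (rule big)
      then have "i \<notin> A" using A by auto
      then show "cm i = 1" by (simp add: cm_def)
    qed
  qed
  have key: "\<psi> (\<phi> x) = diag cs (\<psi> x)" if x: "x \<in> grass_carrier" for x
  proof -
    have "(\<psi> \<circ> \<phi>) x = (diag cs \<circ> \<psi>) x"
    proof (rule ghom_agree[OF ghom_comp[OF psih fhom] ghom_comp[OF csh psih], of "{i. 1 \<le> i}"])
      show "x \<in> grass_carrier" by (rule x)
      show "\<And>S. x S \<noteq> 0 \<Longrightarrow> S \<subseteq> {i. 1 \<le> i}" using carrier_supp[OF x] by blast
    next
      fix i :: nat assume "i \<in> {i. 1 \<le> i}"
      then have i: "1 \<le> i" by simp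
      have gi: "gen i \<in> grass_carrier" by (rule carrier_gen[OF i])
      have gpi: "gen (p i) \<in> grass_carrier"
      proof (rule carrier_gen)
        have "p i \<noteq> 0"
        proof
          assume "p i = 0"
          then have "p i = p 0" using p(2) by simp
          then have "i = 0" by (rule injD[OF bij_is_inj[OF p(1)]])
          then show False using i by simp
        qed
        then show "1 \<le> p i" by simp
      qed
      show "(\<psi> \<circ> \<phi>) (gen i) = (diag cs \<circ> \<psi>) (gen i)"
      proof (cases "i \<in> A")
        case True
        then have iN: "i \<in> {1..N}" using A by auto
        have pi: "p i \<in> {1..s}" using p(3) True by auto
        have fi: "\<phi> (gen i) = img P i" using act i True by (simp add: acts_def)
        have "diag ch (gen i) = gsmult (1/2) (gen i)" using True by (simp add: diag_gen ch_def)
        then have "(\<phi> \<circ> diag ch) (gen i) = gsmult (1/2) (img P i)"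
          using ghomD(3)[OF fhom gi] fi by simp
        moreover have "diag cm (gsmult (1/2) (img P i)) = gsmult (1/2) (diag cm (img P i))"
          by (rule ghomD(3)[OF cmh img_car[OF tri Pav iN]])
        moreover have "diag cm (img P i) = gadd (gsmult (-1) (gsmult (-2) (gen i))) (gsmult 2 (P i))"
          unfolding img_def
          using ghomD(2)[OF cmh carrier_gsmult[OF gi] carrier_gsmult[OF P_car[OF tri Pav iN]]]
            ghomD(3)[OF cmh gi] ghomD(3)[OF cmh P_car[OF tri Pav iN]] cmfix[OF iN]
          by (simp add: diag_gen True, simp add: cm_def True)
        moreover have "gsmult (1/2) (gadd (gsmult (-1) (gsmult (-2) (gen i))) (gsmult 2 (P i)))
            = gadd (gen i) (P i)"
          by (auto simp: gadd_def gsmult_def intro!: ext)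
        moreover have "pmap p (gadd (gen i) (P i)) = gadd (gen (p i)) (P i)"
          using ghomD(2)[OF ph gi P_car[OF tri Pav iN]] pmap_gen[OF p(1,2), of i, where 'a='a]
            pmap_fix[OF p(1,2), of "P i"] P_supp[OF tri Pav iN] p(4) by auto
        ultimately have psi: "\<psi> (gen i) = gadd (gen (p i)) (P i)"
          by (simp add: \<psi>_def)
        have "(\<psi> \<circ> \<phi>) (gen i) = gadd (gsmult (-1) (\<psi> (gen i))) (gsmult 2 (\<psi> (P i)))"
          unfolding o_def fi img_def
          using ghomD(2)[OF psih carrier_gsmult[OF gi] carrier_gsmult[OF P_car[OF tri Pav iN]]]
            ghomD(3)[OF psih gi] ghomD(3)[OF psih P_car[OF tri Pav iN]] by simp
        also have "\<dots> = gadd (gsmult (-1) (gadd (gen (p i)) (P i))) (gsmult 2 (P i))"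
          using psi Pfix(1)[OF iN] by simp
        also have "\<dots> = gadd (gsmult (-1) (gen (p i))) (P i)"
          by (auto simp: gadd_def gsmult_def intro!: ext)
        also have "\<dots> = diag cs (gadd (gen (p i)) (P i))"
          using ghomD(2)[OF csh gpi P_car[OF tri Pav iN]] Pfix(2)[OF iN] pi
          by (simp add: diag_gen cs_def)
        finally show ?thesis using psi by simp
      next
        case False
        have pi: "p i \<notin> {1..s}"
        proof
          assume "p i \<in> {1..s}"
          then have "p i \<in> p ` A" using p(3) by simp
          then obtain a where a: "a \<in> A" "p i = p a" by blast
          have "i = a" using a(2) by (rule injD[OF bij_is_inj[OF p(1)]])
          then show False using False a by simp
        qed
        have fi: "\<phi> (gen i) = gen i" using act i False by (simp add: acts_def)
        have g1: "gsmult 1 y = y" for y :: "'a grass" by (simp add: gsmult_def)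
        have "diag ch (gen i) = gen i" using False g1 diag_gen[of ch i] by (simp add: ch_def)
        moreover have "diag cm (gen i) = gen i" using False g1 diag_gen[of cm i] by (simp add: cm_def)
        ultimately have psi: "\<psi> (gen i) = gen (p i)"
          using fi pmap_gen[OF p(1,2), of i, where 'a='a] by (simp add: \<psi>_def)
        have "diag cs (gen (p i)) = gen (p i)" using pi g1 diag_gen[of cs "p i"] by (simp add: cs_def del: atLeastAtMost_iff)
        then show ?thesis using psi fi by simp
      qed
    qed
    then show ?thesis by simp
  qed
  have bij: "bij_betw \<psi> grass_carrier grass_carrier" using psiA by (simp add: grass_aut_def)
  have inj: "inj_on \<psi> grass_carrier" and surj: "\<psi> ` grass_carrier = grass_carrier"
    using bij by (auto simp: bij_betw_def)
  have fC: "\<phi> x \<in> grass_carrier" if "x \<in> grass_carrier" for x using ghomD(1)[OF fhom that] .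
  have psiC: "\<psi> x \<in> grass_carrier" if "x \<in> grass_carrier" for x using ghomD(1)[OF psih that] .
  have im: "\<psi> ` {x \<in> grass_carrier. Q (\<psi> x)} = {y \<in> grass_carrier. Q y}" for Q
  proof
    show "\<psi> ` {x \<in> grass_carrier. Q (\<psi> x)} \<subseteq> {y \<in> grass_carrier. Q y}"
      using psiC by auto
    show "{y \<in> grass_carrier. Q y} \<subseteq> \<psi> ` {x \<in> grass_carrier. Q (\<psi> x)}"
    proof
      fix y assume y: "y \<in> {y \<in> grass_carrier. Q y}"
      then have "y \<in> \<psi> ` grass_carrier" using surj by simp
      then obtain x where x: "x \<in> grass_carrier" "y = \<psi> x" by blast
      then show "y \<in> \<psi> ` {x \<in> grass_carrier. Q (\<psi> x)}" using y by blast
    qed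
  qed
  have d0: "\<psi> ` phi_deg0 \<phi> = sstar_deg0 s"
  proof -
    have "x \<in> grass_carrier \<Longrightarrow> (\<phi> x = x) = (diag cs (\<psi> x) = \<psi> x)" for x
      using inj_on_eq_iff[OF inj fC, of x x] key[of x] by simp
    then have "phi_deg0 \<phi> = {x \<in> grass_carrier. diag cs (\<psi> x) = \<psi> x}"
      unfolding phi_deg0_def by blast
    then have "\<psi> ` phi_deg0 \<phi> = {y \<in> grass_carrier. diag cs y = y}"
      using im[of "\<lambda>y. diag cs y = y"] by simp
    then show ?thesis by (simp add: sstar0_char cs_def)
  qed
  have d1: "\<psi> ` phi_deg1 \<phi> = sstar_deg1 s"
  proof -
    have m: "\<psi> (gsmult (-1) x) = gsmult (-1) (\<psi> x)" if "x \<in> grass_carrier" for x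
      using ghomD(3)[OF psih that] .
    have "x \<in> grass_carrier \<Longrightarrow> (\<phi> x = gsmult (-1) x) = (diag cs (\<psi> x) = gsmult (-1) (\<psi> x))" for x
      using inj_on_eq_iff[OF inj fC carrier_gsmult, of x x "-1"] key[of x] m[of x] by simp
    then have "phi_deg1 \<phi> = {x \<in> grass_carrier. diag cs (\<psi> x) = gsmult (-1) (\<psi> x)}"
      unfolding phi_deg1_def by blast
    then have "\<psi> ` phi_deg1 \<phi> = {y \<in> grass_carrier. diag cs y = gsmult (-1) y}"
      using im[of "\<lambda>y. diag cs y = gsmult (-1) y"] by simp
    then show ?thesis by (simp add: sstar1_char cs_def)
  qed
  show ?thesis unfolding z2_iso_def s_def[symmetric] using psiA d0 d1 by blast
qed

end

theorem mainTheorem7: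
  fixes T :: "nat \<Rightarrow> ('a::field_char_0) grass \<Rightarrow> 'a grass"
    and P :: "nat \<Rightarrow> 'a grass" and N :: nat
  assumes "\<And>j. j \<in> {1..N} \<Longrightarrow> triangular_aut j (T j) (P j)"
    and "\<And>j. j \<in> {1..N} \<Longrightarrow> P j \<in> grass_avoid N \<inter> grass_odd"
  shows "(\<forall>\<phi>\<in>tau_group T N. \<forall>\<psi>\<in>tau_group T N.
            compose grass_carrier \<phi> \<psi> = compose grass_carrier \<psi> \<phi>)
       \<and> card (tau_group T N) = 2 ^ N
       \<and> (\<forall>\<phi>\<in>tau_group T N. compose grass_carrier \<phi> \<phi> = (\<lambda>x\<in>grass_carrier. x))
       \<and> (\<forall>js. distinct js \<and> set js \<subseteq> {1..N} \<longrightarrow>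
            z2_iso (phi_deg0 (comp_list T js)) (phi_deg1 (comp_list T js))
                   (sstar_deg0 (length js)) (sstar_deg1 (length js)))"
proof -
  have HS: "tau_group T N \<subseteq> HH P N" by (rule gen_sub[OF assms])
  have c1: "\<forall>\<phi>\<in>tau_group T N. \<forall>\<psi>\<in>tau_group T N.
            compose grass_carrier \<phi> \<psi> = compose grass_carrier \<psi> \<phi>"
    using HH_commute[OF assms] HS by blast
  have c2: "card (tau_group T N) = 2 ^ N" by (rule tau_card[OF assms])
  have c3: "\<forall>\<phi>\<in>tau_group T N. compose grass_carrier \<phi> \<phi> = (\<lambda>x\<in>grass_carrier. x)"
    using HH_sq[OF assms] HS by blast
  have c4: "\<forall>js. distinct js \<and> set js \<subseteq> {1..N} \<longrightarrow>
            z2_iso (phi_deg0 (comp_list T js)) (phi_deg1 (comp_list T js))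
                   (sstar_deg0 (length js)) (sstar_deg1 (length js))"
  proof (intro allI impI)
    fix js :: "nat list" assume js: "distinct js \<and> set js \<subseteq> {1..N}"
    have h: "comp_list T js \<in> HH P N" "acts P (comp_list T js) (set js)"
      using comp_list_HH[OF assms] js by auto
    have "length js = card (set js)" using js distinct_card by metis
    then show "z2_iso (phi_deg0 (comp_list T js)) (phi_deg1 (comp_list T js))
                   (sstar_deg0 (length js)) (sstar_deg1 (length js))"
      using z2_main[OF assms h] js by simp
  qed
  show ?thesis using c1 c2 c3 c4 by blast
qed

end
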